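(* Let $S$ be an expanding automaton semigroup with a unique maximal subgroup $G$. Then $G$ is isomorphic to a self-similar group.
   Context: An expanding automaton is a quadruple $(Q,\Sigma,t,o)$ with $Q$ a finite set of states, $\Sigma$ a finite alphabet, $t:Q\times\Sigma\to Q$ and $o:Q\times\Sigma\to\Sigma^+$. Each state $q$ induces $q:\Sigma^*\to\Sigma^*$ by $q(\emptyset)=\emptyset$, $q(\sigma w)=o(q,\sigma)\,q'(w)$ with $q'=t(q,\sigma)$; an expanding automaton semigroup is the semigroup of maps generated under composition by the states. A subgroup of $S$ is a subsemigroup which is a group. A self-similar group is the group generated by the states of an invertible synchronous automaton (output in $\Sigma$, $o(q,\cdot)$ a permutation of $\Sigma$ for each $q$) with possibly infinitely many states. *)

theory Defs
  imports "HOL-Algebra.Bij" "HOL-Algebra.Generated_Groups"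
begin

(* Expanding automaton (Q, Sigma, t, o): Q = UNIV of a finite type 'q,
   Sigma = UNIV of a finite type 'a, t :: 'q => 'a => 'q, o :: 'q => 'a => 'a list
   (with o q a nonempty). *)
fun exp_act :: "('q \<Rightarrow> 'a \<Rightarrow> 'q) \<Rightarrow> ('q \<Rightarrow> 'a \<Rightarrow> 'a list) \<Rightarrow> 'q \<Rightarrow> 'a list \<Rightarrow> 'a list" where
  "exp_act t out q [] = []"
| "exp_act t out q (s # w) = out q s @ exp_act t out (t q s) w"

definition expanding_automaton :: "('q::finite \<Rightarrow> 'a::finite \<Rightarrow> 'q) \<Rightarrow> ('q \<Rightarrow> 'a \<Rightarrow> 'a list) \<Rightarrow> bool" where
  "expanding_automaton t out \<longleftrightarrow> (\<forall>q s. out q s \<noteq> [])"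

inductive_set sgen :: "('b \<Rightarrow> 'b) set \<Rightarrow> ('b \<Rightarrow> 'b) set" for A where
  base: "f \<in> A \<Longrightarrow> f \<in> sgen A"
| comp: "f \<in> sgen A \<Longrightarrow> g \<in> sgen A \<Longrightarrow> f \<circ> g \<in> sgen A"

definition exp_semigroup :: "('q \<Rightarrow> 'a \<Rightarrow> 'q) \<Rightarrow> ('q \<Rightarrow> 'a \<Rightarrow> 'a list) \<Rightarrow> ('a list \<Rightarrow> 'a list) set" where
  "exp_semigroup t out = sgen (range (exp_act t out))"

(* a subgroup of a semigroup of maps: a subsemigroup that is a group (its identity
   need not be the identity map) *)
definition sg_subgroup :: "('b \<Rightarrow> 'b) set \<Rightarrow> ('b \<Rightarrow> 'b) set \<Rightarrow> bool" where
  "sg_subgroup S H \<longleftrightarrow> H \<subseteq> S \<and> (\<exists>e. group \<lparr>carrier = H, mult = (\<circ>), one = e\<rparr>)"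

definition sg_maximal_subgroup :: "('b \<Rightarrow> 'b) set \<Rightarrow> ('b \<Rightarrow> 'b) set \<Rightarrow> bool" where
  "sg_maximal_subgroup S H \<longleftrightarrow> sg_subgroup S H \<and> (\<forall>K. sg_subgroup S K \<and> H \<subseteq> K \<longrightarrow> K = H)"

definition group_of :: "('b \<Rightarrow> 'b) set \<Rightarrow> ('b \<Rightarrow> 'b) monoid" where
  "group_of H = \<lparr>carrier = H, mult = (\<circ>),
     one = (THE e. group \<lparr>carrier = H, mult = (\<circ>), one = e\<rparr>)\<rparr>"

(* Invertible synchronous automaton over the finite alphabet X (a finite set of nats),
   states nat (possibly infinitely many), t :: nat => nat => nat, o :: nat => nat => nat
   with o q a permutation of X. *)
fun sync_act :: "(nat \<Rightarrow> nat \<Rightarrow> nat) \<Rightarrow> (nat \<Rightarrow> nat \<Rightarrow> nat) \<Rightarrow> nat \<Rightarrow> nat list \<Rightarrow> nat list" where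
  "sync_act t out q [] = []"
| "sync_act t out q (x # w) = out q x # sync_act t out (t q x) w"

(* the map induced by state q on X^*, extended by the identity outside X^* so that it is a
   permutation of UNIV *)
definition sync_state_map :: "nat set \<Rightarrow> (nat \<Rightarrow> nat \<Rightarrow> nat) \<Rightarrow> (nat \<Rightarrow> nat \<Rightarrow> nat) \<Rightarrow> nat \<Rightarrow> nat list \<Rightarrow> nat list" where
  "sync_state_map X t out q w = (if w \<in> lists X then sync_act t out q w else w)"

definition invertible_sync_automaton :: "nat set \<Rightarrow> (nat \<Rightarrow> nat \<Rightarrow> nat) \<Rightarrow> (nat \<Rightarrow> nat \<Rightarrow> nat) \<Rightarrow> bool" where
  "invertible_sync_automaton X t out \<longleftrightarrow> finite X \<and>
     (\<forall>q. bij_betw (out q) X X)"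

definition self_similar_group :: "nat set \<Rightarrow> (nat \<Rightarrow> nat \<Rightarrow> nat) \<Rightarrow> (nat \<Rightarrow> nat \<Rightarrow> nat) \<Rightarrow> (nat list \<Rightarrow> nat list) monoid" where
  "self_similar_group X t out =
     (BijGroup UNIV)\<lparr>carrier := generate (BijGroup UNIV) (range (sync_state_map X t out))\<rparr>"

end

theory Submission
  imports Defs "HOL-Library.Countable_Set"
begin


definition secw :: "('b list \<Rightarrow> 'b list) \<Rightarrow> 'b list \<Rightarrow> 'b list \<Rightarrow> 'b list" where
  "secw f u = (\<lambda>v. drop (length (f u)) (f (u @ v)))"

lemma exp_act_append:
  "exp_act t out q (u @ v) = exp_act t out q u @ exp_act t out (fold (\<lambda>s q. t q s) u q) v"
  by (induction u arbitrary: q) auto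

lemma S_sec:
  assumes "f \<in> sgen (range (exp_act t out))"
  shows "\<forall>u. (\<forall>v. f (u @ v) = f u @ secw f u v) \<and> secw f u \<in> sgen (range (exp_act t out))"
  using assms
proof (induction rule: sgen.induct)
  case (base f)
  then obtain q where q: "f = exp_act t out q" by auto
  show ?case
  proof (intro allI conjI)
    fix u v show "f (u @ v) = f u @ secw f u v"
      by (simp add: q secw_def exp_act_append)
  next
    fix u
    have "secw f u = exp_act t out (fold (\<lambda>s q. t q s) u q)"
      by (rule ext) (simp add: q secw_def exp_act_append)
    then show "secw f u \<in> sgen (range (exp_act t out))" by (auto intro: sgen.base)
  qed
next
  case (comp f g)
  show ?case
  proof (intro allI conjI)
    fix u v
    have "(f \<circ> g) (u @ v) = f (g u @ secw g u v)" using comp by simp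
    also have "\<dots> = f (g u) @ secw f (g u) (secw g u v)" using comp by blast
    finally show "(f \<circ> g) (u @ v) = (f \<circ> g) u @ secw (f \<circ> g) u v"
      by (simp add: secw_def)
  next
    fix u
    have "secw (f \<circ> g) u = secw f (g u) \<circ> secw g u"
    proof
      fix v
      have "(f \<circ> g) (u @ v) = f (g u) @ secw f (g u) (secw g u v)" using comp by simp
      then show "secw (f \<circ> g) u v = (secw f (g u) \<circ> secw g u) v"
        by (simp add: secw_def)
    qed
    then show "secw (f \<circ> g) u \<in> sgen (range (exp_act t out))"
      using comp by (auto intro: sgen.comp)
  qed
qed

lemma exp_act_len:
  assumes "expanding_automaton t out"
  shows "length w \<le> length (exp_act t out q w)"
proof (induction w arbitrary: q)
  case (Cons s w)
  have "out q s \<noteq> []" using assms by (simp add: expanding_automaton_def)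
  then have "length (out q s) \<ge> 1" by (cases "out q s") auto
  with Cons[of "t q s"] show ?case by simp
qed simp

lemma S_len:
  assumes "expanding_automaton t out" "f \<in> sgen (range (exp_act t out))"
  shows "length w \<le> length (f w)"
  using assms(2)
proof (induction arbitrary: w rule: sgen.induct)
  case (base f) then show ?case using exp_act_len[OF assms(1)] by auto
next
  case (comp f g) then show ?case using le_trans comp.IH by (simp only: comp_apply) blast
qed

fun compl :: "('b \<Rightarrow> 'b) list \<Rightarrow> 'b \<Rightarrow> 'b" where
  "compl [] = id" | "compl (f # fs) = f \<circ> compl fs"

lemma compl_append: "compl (fs @ gs) = compl fs \<circ> compl gs"
  by (induction fs) (simp_all add: comp_assoc)

lemma sgen_countable:
  assumes "countable A" shows "countable (sgen A)"
proof -
  have "sgen A \<subseteq> compl ` lists A"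
  proof
    fix f assume "f \<in> sgen A" then show "f \<in> compl ` lists A"
    proof (induction rule: sgen.induct)
      case (base f)
      then have "[f] \<in> lists A" "f = compl [f]" by auto
      then show ?case by blast
    next
      case (comp f g)
      then obtain fs gs where "fs \<in> lists A" "gs \<in> lists A" "f = compl fs" "g = compl gs" by blast
      moreover have "f \<circ> g = compl (fs @ gs)"
        by (simp add: \<open>f = _\<close> \<open>g = _\<close> compl_append)
      ultimately have "fs @ gs \<in> lists A" "f \<circ> g = compl (fs @ gs)" by auto
      then show ?case by blast
    qed
  qed
  then show ?thesis by (rule countable_subset[OF _ countable_image[OF countable_lists[OF assms]]])
qed

lemma S_nil:
  assumes "f \<in> sgen (range (exp_act t out))" shows "f [] = []"
  using assms by (induction rule: sgen.induct) auto



theorem mainTheorem12: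
  fixes t :: "'q::finite \<Rightarrow> 'a::finite \<Rightarrow> 'q" and out :: "'q \<Rightarrow> 'a \<Rightarrow> 'a list"
    and G :: "('a list \<Rightarrow> 'a list) set"
  assumes "expanding_automaton t out"
    and "sg_maximal_subgroup (exp_semigroup t out) G"
    and "\<forall>K. sg_maximal_subgroup (exp_semigroup t out) K \<longrightarrow> K = G"
  shows "\<exists>(X::nat set) (t'::nat \<Rightarrow> nat \<Rightarrow> nat) (out'::nat \<Rightarrow> nat \<Rightarrow> nat).
           invertible_sync_automaton X t' out' \<and> group_of G \<cong> self_similar_group X t' out'"
proof -
  define S where "S = sgen (range (exp_act t out))"
  have SS: "exp_semigroup t out = S" by (simp add: S_def exp_semigroup_def)
  have Scomp: "f \<in> S \<Longrightarrow> g \<in> S \<Longrightarrow> f \<circ> g \<in> S" for f g unfolding S_def by (rule sgen.comp)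
  have Ssec: "f \<in> S \<Longrightarrow> f (u @ v) = f u @ secw f u v" for f u v
    using S_sec[of f t out] unfolding S_def by blast
  have SsecS: "f \<in> S \<Longrightarrow> secw f u \<in> S" for f u
    using S_sec[of f t out] unfolding S_def by blast
  have Slen: "f \<in> S \<Longrightarrow> length w \<le> length (f w)" for f w
    using S_len[OF assms(1)] unfolding S_def by blast
  have Snil: "f \<in> S \<Longrightarrow> f [] = []" for f
    using S_nil unfolding S_def by blast
  from assms(2) obtain e where GS: "G \<subseteq> S" and grp: "group \<lparr>carrier = G, mult = (\<circ>), one = e\<rparr>"
    unfolding sg_maximal_subgroup_def sg_subgroup_def SS by blast
  have Gmax: "\<And>K. sg_subgroup S K \<Longrightarrow> G \<subseteq> K \<Longrightarrow> K = G"
    using assms(2) unfolding sg_maximal_subgroup_def SS by blast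
  interpret Gr: group "\<lparr>carrier = G, mult = (\<circ>), one = e\<rparr>" by (fact grp)
  have eG: "e \<in> G" using Gr.one_closed by simp
  have gre: "g \<in> G \<Longrightarrow> g \<circ> e = g" for g using Gr.r_one[of g] by simp
  have gle: "g \<in> G \<Longrightarrow> e \<circ> g = g" for g using Gr.l_one[of g] by simp
  have ginv: "g \<in> G \<Longrightarrow> \<exists>g'\<in>G. g' \<circ> g = e \<and> g \<circ> g' = e" for g
    using Gr.l_inv[of g] Gr.r_inv[of g] Gr.inv_closed[of g] by auto
  have gmult: "g \<in> G \<Longrightarrow> h \<in> G \<Longrightarrow> g \<circ> h \<in> G" for g h using Gr.m_closed[of g h] by simp
  have eS: "e \<in> S" using eG GS by auto
  have ee: "e \<circ> e = e" using gre[OF eG] .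
  define H where "H f = {x \<in> S. x \<circ> f = x \<and> f \<circ> x = x \<and> (\<exists>y\<in>S. y \<circ> f = y \<and> f \<circ> y = y \<and> x \<circ> y = f \<and> y \<circ> x = f)}" for f
  have Hgrp: "group \<lparr>carrier = H f, mult = (\<circ>), one = f\<rparr>" if fS: "f \<in> S" and ff: "f \<circ> f = f" for f
  proof (rule groupI)
    fix x y assume x: "x \<in> carrier \<lparr>carrier = H f, mult = (\<circ>), one = f\<rparr>" and y: "y \<in> carrier \<lparr>carrier = H f, mult = (\<circ>), one = f\<rparr>"
    from x obtain x' where x': "x \<in> S" "x \<circ> f = x" "f \<circ> x = x" "x' \<in> S" "x' \<circ> f = x'" "f \<circ> x' = x'" "x \<circ> x' = f" "x' \<circ> x = f"
      by (auto simp: H_def)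
    from y obtain y' where y': "y \<in> S" "y \<circ> f = y" "f \<circ> y = y" "y' \<in> S" "y' \<circ> f = y'" "f \<circ> y' = y'" "y \<circ> y' = f" "y' \<circ> y = f"
      by (auto simp: H_def)
    have "(x \<circ> y) \<circ> (y' \<circ> x') = f"
      by (metis comp_assoc x'(2,7) y'(7))
    moreover have "(y' \<circ> x') \<circ> (x \<circ> y) = f"
      by (metis comp_assoc x'(8) y'(5,8))
    ultimately show "x \<otimes>\<^bsub>\<lparr>carrier = H f, mult = (\<circ>), one = f\<rparr>\<^esub> y \<in> carrier \<lparr>carrier = H f, mult = (\<circ>), one = f\<rparr>"
    proof -
      have "(x \<circ> y) \<circ> f = x \<circ> y" by (metis comp_assoc y'(2))
      moreover have "f \<circ> (x \<circ> y) = x \<circ> y" by (metis comp_assoc x'(3))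
      moreover have "(y' \<circ> x') \<circ> f = y' \<circ> x'" by (metis comp_assoc x'(5))
      moreover have "f \<circ> (y' \<circ> x') = y' \<circ> x'" by (metis comp_assoc y'(6))
      moreover have "x \<circ> y \<in> S" "y' \<circ> x' \<in> S" using x' y' Scomp by auto
      ultimately have "x \<circ> y \<in> H f" unfolding H_def using \<open>(x \<circ> y) \<circ> (y' \<circ> x') = f\<close> \<open>(y' \<circ> x') \<circ> (x \<circ> y) = f\<close> by blast
      then show ?thesis by simp
    qed
  next
    show "\<one>\<^bsub>\<lparr>carrier = H f, mult = (\<circ>), one = f\<rparr>\<^esub> \<in> carrier \<lparr>carrier = H f, mult = (\<circ>), one = f\<rparr>"
      using fS ff by (auto simp: H_def)
  next
    fix x y z show "x \<otimes>\<^bsub>\<lparr>carrier = H f, mult = (\<circ>), one = f\<rparr>\<^esub> y \<otimes>\<^bsub>\<lparr>carrier = H f, mult = (\<circ>), one = f\<rparr>\<^esub> z =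
           x \<otimes>\<^bsub>\<lparr>carrier = H f, mult = (\<circ>), one = f\<rparr>\<^esub> (y \<otimes>\<^bsub>\<lparr>carrier = H f, mult = (\<circ>), one = f\<rparr>\<^esub> z)"
      by (simp add: comp_assoc)
  next
    fix x assume "x \<in> carrier \<lparr>carrier = H f, mult = (\<circ>), one = f\<rparr>"
    then show "\<one>\<^bsub>\<lparr>carrier = H f, mult = (\<circ>), one = f\<rparr>\<^esub> \<otimes>\<^bsub>\<lparr>carrier = H f, mult = (\<circ>), one = f\<rparr>\<^esub> x = x"
      by (simp add: H_def)
  next
    fix x assume "x \<in> carrier \<lparr>carrier = H f, mult = (\<circ>), one = f\<rparr>"
    then obtain x' where x': "x \<in> S" "x \<circ> f = x" "f \<circ> x = x" "x' \<in> S" "x' \<circ> f = x'" "f \<circ> x' = x'" "x \<circ> x' = f" "x' \<circ> x = f"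
      by (auto simp: H_def)
    then have "x' \<in> H f" by (auto simp: H_def)
    then show "\<exists>y\<in>carrier \<lparr>carrier = H f, mult = (\<circ>), one = f\<rparr>. y \<otimes>\<^bsub>\<lparr>carrier = H f, mult = (\<circ>), one = f\<rparr>\<^esub> x =
                 \<one>\<^bsub>\<lparr>carrier = H f, mult = (\<circ>), one = f\<rparr>\<^esub>"
      using x' by auto
  qed
  have Hsub: "sg_subgroup S (H f)" if "f \<in> S" "f \<circ> f = f" for f
    unfolding sg_subgroup_def using Hgrp[OF that] by (auto simp: H_def)
  have Hmax: "sg_maximal_subgroup S (H f)" if fS: "f \<in> S" and ff: "f \<circ> f = f" for f
    unfolding sg_maximal_subgroup_def
  proof (intro conjI allI impI)
    show "sg_subgroup S (H f)" by (rule Hsub[OF that])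
    fix K assume K: "sg_subgroup S K \<and> H f \<subseteq> K"
    then obtain e' where KS: "K \<subseteq> S" and Kg: "group \<lparr>carrier = K, mult = (\<circ>), one = e'\<rparr>"
      unfolding sg_subgroup_def by blast
    interpret Kr: group "\<lparr>carrier = K, mult = (\<circ>), one = e'\<rparr>" by (fact Kg)
    have fH: "f \<in> H f" using fS ff by (auto simp: H_def)
    with K have fK: "f \<in> K" by auto
    have fe': "f = e'" using Kr.l_cancel_one[of f f] fK ff by simp
    show "K = H f"
    proof
      show "K \<subseteq> H f"
      proof
        fix k assume k: "k \<in> K"
        have "k \<circ> f = k" "f \<circ> k = k" using Kr.r_one[of k] Kr.l_one[of k] k fe' by simp_all
        moreover have "inv\<^bsub>\<lparr>carrier = K, mult = (\<circ>), one = e'\<rparr>\<^esub> k \<in> K"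
          using Kr.inv_closed[of k] k by simp
        moreover note Kr.l_inv[of k] Kr.r_inv[of k]
          Kr.r_one[of "inv\<^bsub>\<lparr>carrier = K, mult = (\<circ>), one = e'\<rparr>\<^esub> k"]
          Kr.l_one[of "inv\<^bsub>\<lparr>carrier = K, mult = (\<circ>), one = e'\<rparr>\<^esub> k"]
        ultimately show "k \<in> H f" using k KS fe' unfolding H_def by auto
      qed
    qed (use K in auto)
  qed
  have HeG: "H e = G"
  proof (rule Gmax[OF Hsub[OF eS ee]])
    show "G \<subseteq> H e"
    proof
      fix g assume g: "g \<in> G"
      then obtain g' where "g' \<in> G" "g' \<circ> g = e" "g \<circ> g' = e" using ginv by blast
      then show "g \<in> H e" using g GS gre gle by (auto simp: H_def)
    qed
  qed
  have idem: "f = e" if fS: "f \<in> S" and ff: "f \<circ> f = f" for f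
  proof -
    have "H f = G" using assms(3) Hmax[OF that] SS by auto
    moreover have "f \<in> H f" using fS ff by (auto simp: H_def)
    ultimately have fG: "f \<in> G" by auto
    show "f = e" using Gr.l_cancel_one[of f f] fG ff by simp
  qed
  have Ssec1: "f \<in> S \<Longrightarrow> f (s # v) = f [s] @ secw f [s] v" for f s v
    using Ssec[of f "[s]" v] by simp
  have eprefix: "e p = p \<and> secw e p v = v" if h: "e (p @ v) = p @ v" for p v
  proof -
    have l1: "length p \<le> length (e p)" by (rule Slen[OF eS])
    have l2: "length v \<le> length (secw e p v)" by (rule Slen[OF SsecS[OF eS]])
    have eq: "e p @ secw e p v = p @ v" using Ssec[OF eS, of p v] h by simp
    then have "length (e p) + length (secw e p v) = length p + length v"
      by (metis length_append)
    with l1 l2 have "length (e p) = length p" by linarith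
    with eq show ?thesis by (simp add: append_eq_append_conv)
  qed
  have secwe: "secw e p = e" if ep: "e p = p" for p
  proof (rule idem)
    show "secw e p \<in> S" by (rule SsecS[OF eS])
    show "secw e p \<circ> secw e p = secw e p"
    proof
      fix v
      have "e (e (p @ v)) = e (p @ v)" using ee by (metis comp_apply)
      moreover have "e (p @ v) = p @ secw e p v" using Ssec[OF eS, of p v] ep by simp
      moreover have "e (p @ secw e p v) = p @ secw e p (secw e p v)" using Ssec[OF eS, of p] ep by simp
      ultimately show "(secw e p \<circ> secw e p) v = secw e p v" by simp
    qed
  qed
  have eT: "e (p @ v) = p @ e v" if "e p = p" for p v
    using Ssec[OF eS, of p v] secwe[OF that] that by simp
  define L where "L = {s. e [s] = [s]}"
  have Tlists: "e w = w \<longleftrightarrow> w \<in> lists L" for w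
  proof (induction w)
    case Nil then show ?case using Snil[OF eS] by simp
  next
    case (Cons s w)
    show ?case
    proof
      assume h: "e (s # w) = s # w"
      then have "e [s] = [s] \<and> secw e [s] w = w" using eprefix[of "[s]" w] by simp
      then show "s # w \<in> lists L" using Cons secwe[of "[s]"] by (simp add: L_def)
    next
      assume "s # w \<in> lists L"
      then show "e (s # w) = s # w" using Cons eT[of "[s]" w] by (simp add: L_def)
    qed
  qed
  have gT: "g w \<in> lists L" if "g \<in> G" for g w
    using Tlists[of "g w"] gle[OF that] by (metis comp_apply)
  have glen: "length (g w) = length w" if g: "g \<in> G" and w: "w \<in> lists L" for g w
  proof -
    obtain g' where g': "g' \<in> G" "g' \<circ> g = e" using ginv[OF g] by blast
    have "g' (g w) = w" using g'(2) Tlists[of w] w by (metis comp_apply)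
    then show ?thesis using Slen[of g w] Slen[of g' "g w"] g g' GS by fastforce
  qed
  have gletter: "\<exists>s'\<in>L. g [s] = [s']" if "g \<in> G" "s \<in> L" for g s
  proof -
    have "length (g [s]) = 1" using glen[OF that(1), of "[s]"] that(2) by simp
    then obtain s' where "g [s] = [s']" by (metis One_nat_def length_0_conv length_Suc_conv)
    then show ?thesis using gT[OF that(1), of "[s]"] by auto
  qed
  have absorb: "secw f [s] \<circ> e = secw f [s] \<and> e \<circ> secw f [s] = secw f [s]"
    if fS: "f \<in> S" and fe: "f \<circ> e = f" and ef: "e \<circ> f = f" and s: "s \<in> L" for f s
  proof
    have es: "e [s] = [s]" using s by (simp add: L_def)
    show "secw f [s] \<circ> e = secw f [s]"
    proof
      fix v
      have "e (s # v) = s # e v" using eT[OF es, of v] by simp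
      then have "f (s # e v) = f (s # v)" using fe by (metis comp_apply)
      then show "(secw f [s] \<circ> e) v = secw f [s] v" using Ssec1[OF fS, of s v] Ssec1[OF fS, of s "e v"] by simp
    qed
    show "e \<circ> secw f [s] = secw f [s]"
    proof
      fix v
      have efs: "e (f [s]) = f [s]" using ef by (metis comp_apply)
      have "e (f (s # v)) = f (s # v)" using ef by (metis comp_apply)
      then have "f [s] @ e (secw f [s] v) = f [s] @ secw f [s] v"
        using Ssec1[OF fS, of s v] eT[OF efs] by simp
      then show "(e \<circ> secw f [s]) v = secw f [s] v" by simp
    qed
  qed
  have gsec: "secw g [s] \<in> G" if g: "g \<in> G" and s: "s \<in> L" for g s
  proof -
    obtain g' where g': "g' \<in> G" "g' \<circ> g = e" "g \<circ> g' = e" using ginv[OF g] by blast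
    obtain s' where s': "s' \<in> L" "g [s] = [s']" using gletter[OF g s] by blast
    have es: "e [s] = [s]" and es': "e [s'] = [s']" using s s' by (auto simp: L_def)
    have g's': "g' [s'] = [s]" using g'(2) s'(2) es by (metis comp_apply)
    define k where "k = secw g [s]"
    define h where "h = secw g' [s']"
    have gS: "g \<in> S" and g'S: "g' \<in> S" using g g' GS by auto
    have hk: "h \<circ> k = e"
    proof
      fix v
      have "g' (g (s # v)) = s # e v" using g'(2) eT[OF es, of v] by (metis append_Cons append_Nil comp_apply)
      moreover have "g (s # v) = s' # k v" using Ssec1[OF gS, of s v] s'(2) k_def by simp
      moreover have "g' (s' # k v) = s # h (k v)" using Ssec1[OF g'S, of s' "k v"] g's' h_def by simp
      ultimately show "(h \<circ> k) v = e v" by simp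
    qed
    have kh: "k \<circ> h = e"
    proof
      fix v
      have "g (g' (s' # v)) = s' # e v" using g'(3) eT[OF es', of v] by (metis append_Cons append_Nil comp_apply)
      moreover have "g' (s' # v) = s # h v" using Ssec1[OF g'S, of s' v] g's' h_def by simp
      moreover have "g (s # h v) = s' # k (h v)" using Ssec1[OF gS, of s "h v"] s'(2) k_def by simp
      ultimately show "(k \<circ> h) v = e v" by simp
    qed
    have "k \<circ> e = k \<and> e \<circ> k = k" unfolding k_def by (rule absorb[OF gS gre[OF g] gle[OF g] s])
    moreover have "h \<circ> e = h \<and> e \<circ> h = h" unfolding h_def by (rule absorb[OF g'S gre[OF g'(1)] gle[OF g'(1)] s'(1)])
    moreover have "k \<in> S" "h \<in> S" using SsecS gS g'S k_def h_def by auto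
    ultimately have "k \<in> H e" using hk kh unfolding H_def by blast
    then show ?thesis using HeG k_def by simp
  qed
  have cS: "countable S" unfolding S_def
    by (rule sgen_countable) (rule countable_finite, simp)
  have cG: "countable G" using countable_subset[OF GS cS] .
  have cA: "countable (UNIV :: 'a set)" by (rule countable_finite) simp
  define enc :: "'a \<Rightarrow> nat" where "enc = to_nat_on (UNIV :: 'a set)"
  define dec :: "nat \<Rightarrow> 'a" where "dec = from_nat_into (UNIV :: 'a set)"
  have decenc[simp]: "dec (enc a) = a" for a unfolding enc_def dec_def using cA by simp
  have encinj: "inj enc" unfolding enc_def using cA by (rule inj_on_to_nat_on)
  have decenc_comp[simp]: "dec \<circ> enc = id" by (rule ext) simp
  have decenc_map[simp]: "map dec (map enc u) = u" for u by (induction u) auto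
  define X where "X = enc ` L"
  define idx where "idx = to_nat_on G"
  define r where "r = from_nat_into G"
  have rG: "r n \<in> G" for n unfolding r_def using eG by (intro from_nat_into) auto
  have ridx: "r (idx g) = g" if "g \<in> G" for g unfolding r_def idx_def using cG that by simp
  define out' where "out' n x = (if x \<in> X then enc (hd (r n [dec x])) else x)" for n x
  define t' where "t' n x = idx (secw (r n) [dec x])" for n x
  define \<psi> where "\<psi> g w = (if w \<in> lists X then map enc (g (map dec w)) else w)" for g :: "'a list \<Rightarrow> 'a list" and w
  have mapdec: "map dec w \<in> lists L \<and> map enc (map dec w) = w" if "w \<in> lists X" for w
    using that by (induction w) (auto simp: X_def)
  have mapenc: "map enc u \<in> lists X" if "u \<in> lists L" for u
    using that by (induction u) (auto simp: X_def)
  have sync: "w \<in> lists X \<Longrightarrow> sync_act t' out' n w = map enc (r n (map dec w))" for n w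
  proof (induction w arbitrary: n)
    case Nil then show ?case using Snil rG GS by auto
  next
    case (Cons x w)
    have wX: "w \<in> lists X" using Cons.prems by simp
    obtain s where s: "s \<in> L" "x = enc s" using Cons.prems by (auto simp: X_def)
    define g where "g = r n"
    have g: "g \<in> G" using rG g_def by simp
    obtain s' where s': "s' \<in> L" "g [s] = [s']" using gletter[OF g s(1)] by blast
    have "g (s # map dec w) = s' # secw g [s] (map dec w)"
      using Ssec1[of g s "map dec w"] g GS s' by auto
    moreover have "out' n x = enc s'" using s s' g_def by (simp add: out'_def X_def)
    moreover have "r (t' n x) = secw g [s]" using s g_def ridx[OF gsec[OF g s(1)]] by (simp add: t'_def)
    ultimately show ?case using Cons.IH[OF wX, of "t' n x"] s g_def by simp
  qed
  have ssm: "sync_state_map X t' out' n = \<psi> (r n)" for n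
    by (rule ext) (simp add: sync_state_map_def \<psi>_def sync)
  have rng: "range (sync_state_map X t' out') = \<psi> ` G"
  proof
    show "range (sync_state_map X t' out') \<subseteq> \<psi> ` G" using ssm rG by auto
    show "\<psi> ` G \<subseteq> range (sync_state_map X t' out')"
    proof
      fix f assume "f \<in> \<psi> ` G"
      then obtain g where "g \<in> G" "f = \<psi> g" by blast
      then have "f = sync_state_map X t' out' (idx g)" using ssm ridx by simp
      then show "f \<in> range (sync_state_map X t' out')" by blast
    qed
  qed
  have psi_comp: "\<psi> (g \<circ> h) = \<psi> g \<circ> \<psi> h" if g: "g \<in> G" and h: "h \<in> G" for g h
  proof
    fix w show "\<psi> (g \<circ> h) w = (\<psi> g \<circ> \<psi> h) w"
    proof (cases "w \<in> lists X")
      case True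
      have "map enc (h (map dec w)) \<in> lists X" using mapenc gT[OF h] by blast
      then show ?thesis using True by (simp add: \<psi>_def)
    qed (simp add: \<psi>_def)
  qed
  have psi_e: "\<psi> e = id"
  proof
    fix w show "\<psi> e w = id w"
    proof (cases "w \<in> lists X")
      case True
      then have "e (map dec w) = map dec w" using mapdec Tlists by blast
      then show ?thesis using True mapdec by (simp add: \<psi>_def)
    qed (simp add: \<psi>_def)
  qed
  have psi_bij: "\<psi> g \<in> Bij UNIV" if g: "g \<in> G" for g
  proof -
    obtain g' where g': "g' \<in> G" "g' \<circ> g = e" "g \<circ> g' = e" using ginv[OF g] by blast
    have "\<psi> g \<circ> \<psi> g' = id" "\<psi> g' \<circ> \<psi> g = id"
      using psi_comp[OF g g'(1)] psi_comp[OF g'(1) g] g' psi_e by auto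
    then have "bij (\<psi> g)" using o_bij by blast
    then show ?thesis by (simp add: Bij_def extensional_def)
  qed
  have psi_inj: "inj_on \<psi> G"
  proof
    fix g h assume g: "g \<in> G" and h: "h \<in> G" and eq: "\<psi> g = \<psi> h"
    show "g = h"
    proof
      fix w
      have eT': "e w \<in> lists L" using gT[OF eG] .
      have "\<psi> g (map enc (e w)) = map enc (g (e w))" "\<psi> h (map enc (e w)) = map enc (h (e w))"
        using mapenc[OF eT'] by (simp_all add: \<psi>_def)
      then have "map enc (g (e w)) = map enc (h (e w))" using eq by simp
      then have "g (e w) = h (e w)" using encinj by (simp add: inj_map_eq_map)
      then show "g w = h w" using gre[OF g] gre[OF h] by (metis comp_apply)
    qed
  qed
  interpret BG: group "BijGroup (UNIV :: nat list set)" by (rule group_BijGroup)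
  have BGmult: "a \<otimes>\<^bsub>BijGroup UNIV\<^esub> b = a \<circ> b" if "a \<in> Bij UNIV" "b \<in> Bij UNIV" for a b :: "nat list \<Rightarrow> nat list"
    using that by (simp add: BijGroup_def compose_def restrict_UNIV o_def)
  have BGone: "\<one>\<^bsub>BijGroup (UNIV :: nat list set)\<^esub> = id"
    by (simp add: BijGroup_def restrict_UNIV id_def)
  have sub: "subgroup (\<psi> ` G) (BijGroup UNIV)"
  proof (rule subgroup.intro)
    show "\<psi> ` G \<subseteq> carrier (BijGroup UNIV)" using psi_bij by (auto simp: BijGroup_def)
  next
    fix a b assume "a \<in> \<psi> ` G" "b \<in> \<psi> ` G"
    then obtain g h where "g \<in> G" "h \<in> G" "a = \<psi> g" "b = \<psi> h" by blast
    then have "a \<otimes>\<^bsub>BijGroup UNIV\<^esub> b = \<psi> (g \<circ> h)" "g \<circ> h \<in> G"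
      using BGmult psi_bij psi_comp gmult by auto
    then show "a \<otimes>\<^bsub>BijGroup UNIV\<^esub> b \<in> \<psi> ` G" by blast
  next
    show "\<one>\<^bsub>BijGroup UNIV\<^esub> \<in> \<psi> ` G" using BGone psi_e eG by (metis imageI)
  next
    fix a assume "a \<in> \<psi> ` G"
    then obtain g where g: "g \<in> G" "a = \<psi> g" by blast
    obtain g' where g': "g' \<in> G" "g' \<circ> g = e" "g \<circ> g' = e" using ginv[OF g(1)] by blast
    have "inv\<^bsub>BijGroup UNIV\<^esub> a = \<psi> g'"
    proof (rule BG.inv_equality)
      show "\<psi> g' \<otimes>\<^bsub>BijGroup UNIV\<^esub> a = \<one>\<^bsub>BijGroup UNIV\<^esub>"
        using BGmult psi_bij psi_comp g g' BGone psi_e by auto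
      show "a \<in> carrier (BijGroup UNIV)" "\<psi> g' \<in> carrier (BijGroup UNIV)"
        using psi_bij g g' by (auto simp: BijGroup_def)
    qed
    then show "inv\<^bsub>BijGroup UNIV\<^esub> a \<in> \<psi> ` G" using g' by simp
  qed
  have gen: "generate (BijGroup UNIV) (\<psi> ` G) = \<psi> ` G"
    using BG.generate_subgroup_incl[OF subset_refl sub] generate.incl[of _ "\<psi> ` G" "BijGroup UNIV"] by blast
  have carrSSG: "carrier (self_similar_group X t' out') = \<psi> ` G"
    by (simp add: self_similar_group_def rng gen)
  have multSSG: "a \<otimes>\<^bsub>self_similar_group X t' out'\<^esub> b = a \<otimes>\<^bsub>BijGroup UNIV\<^esub> b" for a b
    by (simp add: self_similar_group_def)
  have iso: "\<psi> \<in> iso (group_of G) (self_similar_group X t' out')"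
    unfolding iso_def hom_def
  proof (intro CollectI conjI)
    show "\<psi> \<in> carrier (group_of G) \<rightarrow> carrier (self_similar_group X t' out')"
      using carrSSG by (auto simp: group_of_def)
    show "\<forall>x\<in>carrier (group_of G). \<forall>y\<in>carrier (group_of G).
        \<psi> (x \<otimes>\<^bsub>group_of G\<^esub> y) = \<psi> x \<otimes>\<^bsub>self_similar_group X t' out'\<^esub> \<psi> y"
      using psi_comp psi_bij BGmult by (simp add: group_of_def multSSG)
    show "bij_betw \<psi> (carrier (group_of G)) (carrier (self_similar_group X t' out'))"
      using psi_inj carrSSG by (simp add: group_of_def bij_betw_def)
  qed
  have finX: "finite X" unfolding X_def by simp
  have bijout: "bij_betw (out' q) X X" for q
  proof -
    define g where "g = r q"
    have g: "g \<in> G" using rG g_def by simp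
    obtain g' where g': "g' \<in> G" "g' \<circ> g = e" using ginv[OF g] by blast
    have img: "out' q ` X \<subseteq> X"
    proof
      fix y assume "y \<in> out' q ` X"
      then obtain s where s: "s \<in> L" "y = out' q (enc s)" by (auto simp: X_def)
      obtain s' where s': "s' \<in> L" "g [s] = [s']" using gletter[OF g s(1)] by blast
      have "y = enc s'" using s s' g_def by (simp add: out'_def X_def)
      then show "y \<in> X" using s' by (simp add: X_def)
    qed
    have inj: "inj_on (out' q) X"
    proof
      fix x y assume "x \<in> X" "y \<in> X" and eq: "out' q x = out' q y"
      then obtain a b where a: "a \<in> L" "x = enc a" and b: "b \<in> L" "y = enc b" by (auto simp: X_def)
      obtain a' where a': "a' \<in> L" "g [a] = [a']" using gletter[OF g a(1)] by blast
      obtain b' where b': "b' \<in> L" "g [b] = [b']" using gletter[OF g b(1)] by blast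
      have "enc a' = enc b'" using eq a b a' b' g_def by (simp add: out'_def X_def)
      then have "a' = b'" using encinj by (simp add: inj_eq)
      then have "g' (g [a]) = g' (g [b])" using a' b' by simp
      then have "e [a] = e [b]" using g'(2) by (metis comp_apply)
      then show "x = y" using a b by (simp add: L_def)
    qed
    show ?thesis unfolding bij_betw_def using endo_inj_surj[OF finX img inj] inj by simp
  qed
  show ?thesis
  proof (intro exI conjI)
    show "invertible_sync_automaton X t' out'" by (simp add: invertible_sync_automaton_def finX bijout)
    show "group_of G \<cong> self_similar_group X t' out'" by (rule is_isoI[OF iso])
  qed
qed

end
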